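(* Let $G=(V,E)$ be a connected $3$-uniform hypergraph. Then $\gamma(G)>0$ if and only if there is a partition $V=V_0\cup V_1\cup V_2$ of $V$ into three nonempty pairwise disjoint sets such that every edge $e\in E$ either satisfies $e\subseteq V_i$ for some $i\in\{0,1,2\}$, or satisfies $e\cap V_j\neq\emptyset$ for each $j=0,1,2$.
   Context: For a $3$-uniform hypergraph $G$ on vertices $v_1,\dots,v_n$, the adjacency tensor $\mathcal{A}(G)$ is the order-$3$, dimension-$n$ tensor with $a_{i_1i_2i_3}=\frac12$ if $\{v_{i_1},v_{i_2},v_{i_3}\}\in E$ and $0$ otherwise. Eigenvectors: $\mathcal{A}x^{2}=\lambda x^{[2]}$, $x\neq0$, $(\mathcal{A}x^2)_i=\sum_{j,k}a_{ijk}x_jx_k$, $x^{[2]}=(x_i^2)$; $\rho$ spectral radius. $\gamma(G)=\gamma(\mathcal{A}(G))$, the stabilizing dimension: the composition length (here: dimension over the field $\mathbb{Z}_3$) of the $\mathbb{Z}_3$-module of eigenvectors $y$ of $\mathcal{A}(G)$ for $\rho(\mathcal{A}(G))$ normalized by $y_1=1$ (no zero entries), with operation $y\circ\hat y=D_yD_{\hat y}v_p$, $D_y=\mathrm{diag}(y_i/|y_i|)$, $v_p$ the positive one. *)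

theory Defs
  imports "HOL-Analysis.Analysis"
begin

text \<open>A 3-uniform hypergraph on the vertex set {0..<n} (vertex v_i of the paper is i-1)
  with edge set E.\<close>
definition uniform3 :: "nat \<Rightarrow> nat set set \<Rightarrow> bool" where
  "uniform3 n E \<longleftrightarrow> (\<forall>e\<in>E. e \<subseteq> {0..<n} \<and> card e = 3)"

definition hg_connected :: "nat \<Rightarrow> nat set set \<Rightarrow> bool" where
  "hg_connected n E \<longleftrightarrow> 0 < n \<and>
     (\<forall>u<n. \<forall>v<n. (u, v) \<in> {(a, b). \<exists>e\<in>E. a \<in> e \<and> b \<in> e}\<^sup>*)"

definition adj_tensor :: "nat set set \<Rightarrow> nat \<Rightarrow> nat \<Rightarrow> nat \<Rightarrow> complex" where
  "adj_tensor E i j k = (if {i, j, k} \<in> E then 1/2 else 0)"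

definition tensor_apply :: "nat \<Rightarrow> nat set set \<Rightarrow> (nat \<Rightarrow> complex) \<Rightarrow> nat \<Rightarrow> complex" where
  "tensor_apply n E x i = (\<Sum>j<n. \<Sum>k<n. adj_tensor E i j k * x j * x k)"

definition eigenpair :: "nat \<Rightarrow> nat set set \<Rightarrow> complex \<Rightarrow> (nat \<Rightarrow> complex) \<Rightarrow> bool" where
  "eigenpair n E lam x \<longleftrightarrow> (\<forall>i\<ge>n. x i = 0) \<and> (\<exists>i<n. x i \<noteq> 0) \<and>
     (\<forall>i<n. tensor_apply n E x i = lam * (x i)\<^sup>2)"

definition spec_radius :: "nat \<Rightarrow> nat set set \<Rightarrow> real" where
  "spec_radius n E = Sup {cmod lam | lam. \<exists>x. eigenpair n E lam x}"

definition stab_set :: "nat \<Rightarrow> nat set set \<Rightarrow> (nat \<Rightarrow> complex) set" where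
  "stab_set n E = {y. eigenpair n E (complex_of_real (spec_radius n E)) y \<and> y 0 = 1 \<and>
      (\<forall>i<n. y i \<noteq> 0)}"

text \<open>Stabilizing dimension: the dimension over Z_3 of the Z_3-module stab_set, i.e.
  the k with card (stab_set) = 3^k (a finite Z_3-vector space of dimension k has 3^k elements).\<close>
definition stab_dim :: "nat \<Rightarrow> nat set set \<Rightarrow> nat" where
  "stab_dim n E = (LEAST k. card (stab_set n E) \<le> 3 ^ k)"

end

theory Submission
  imports Defs
begin

definition ar :: "nat set set \<Rightarrow> nat \<Rightarrow> nat \<Rightarrow> nat \<Rightarrow> real" where
  "ar E i j k = (if {i, j, k} \<in> E then 1/2 else 0)"

lemma ar_nonneg: "ar E i j k \<ge> 0" by (simp add: ar_def)
lemma ar_sym1: "ar E i j k = ar E j i k" by (simp add: ar_def insert_commute)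
lemma ar_sym2: "ar E i j k = ar E i k j" by (simp add: ar_def insert_commute)

lemma ar_diag:
  assumes "uniform3 n E" shows "ar E i i k = 0"
proof -
  have "card {i, i, k} \<noteq> 3" by (cases "i = k") auto
  then show ?thesis using assms by (auto simp: ar_def uniform3_def)
qed

definition TT :: "nat \<Rightarrow> nat set set \<Rightarrow> (nat \<Rightarrow> real) \<Rightarrow> nat \<Rightarrow> real" where
  "TT n E x i = (\<Sum>j<n. \<Sum>k<n. ar E i j k * x j * x k)"

definition BB :: "nat \<Rightarrow> nat set set \<Rightarrow> (nat \<Rightarrow> real) \<Rightarrow> (nat \<Rightarrow> real) \<Rightarrow> (nat \<Rightarrow> real) \<Rightarrow> real" where
  "BB n E u v w = (\<Sum>i<n. \<Sum>j<n. \<Sum>k<n. ar E i j k * u i * v j * w k)"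

definition NN :: "nat \<Rightarrow> (nat \<Rightarrow> real) \<Rightarrow> real" where
  "NN n x = (\<Sum>i<n. (x i)^3)"

lemma BB_swap1: "BB n E u v w = BB n E v u w"
  unfolding BB_def
  by (subst sum.swap) (simp add: ar_sym1 mult_ac)

lemma BB_swap2: "BB n E u v w = BB n E u w v"
  unfolding BB_def
  by (rule sum.cong[OF refl], subst sum.swap) (simp add: ar_sym2 mult_ac)

lemma BB_first: "BB n E u v w = (\<Sum>i<n. u i * (\<Sum>j<n. \<Sum>k<n. ar E i j k * v j * w k))"
  unfolding BB_def by (simp add: sum_distrib_left mult_ac)

lemma BB_TT: "BB n E u x x = (\<Sum>i<n. u i * TT n E x i)"
  unfolding BB_first TT_def ..

lemma BB_expand:
  "BB n E (\<lambda>j. x j + t * u j) (\<lambda>j. x j + t * u j) (\<lambda>j. x j + t * u j) =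
   BB n E x x x + 3 * t * BB n E u x x + 3 * t^2 * BB n E u u x + t^3 * BB n E u u u"
proof -
  have "BB n E (\<lambda>j. x j + t * u j) (\<lambda>j. x j + t * u j) (\<lambda>j. x j + t * u j) =
    BB n E x x x + t * (BB n E u x x + BB n E x u x + BB n E x x u)
     + t^2 * (BB n E u u x + BB n E u x u + BB n E x u u) + t^3 * BB n E u u u"
    unfolding BB_def
    by (simp add: sum.distrib sum_distrib_left algebra_simps power2_eq_square power3_eq_cube)
  moreover have "BB n E x u x = BB n E u x x" by (rule BB_swap1)
  moreover have "BB n E x x u = BB n E u x x" by (metis BB_swap1 BB_swap2)
  moreover have "BB n E u x u = BB n E u u x" by (rule BB_swap2)
  moreover have "BB n E x u u = BB n E u u x" by (metis BB_swap1 BB_swap2)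
  ultimately show ?thesis by simp
qed

lemma edge_decomp:
  assumes "uniform3 n E" "e \<in> E" "i \<in> e"
  obtains j k where "e = {i, j, k}" "i \<noteq> j" "j \<noteq> k" "i \<noteq> k" "i < n" "j < n" "k < n"
proof -
  have "card e = 3" "e \<subseteq> {0..<n}" using assms by (auto simp: uniform3_def)
  then obtain p q w where e: "e = {p, q, w}" "p \<noteq> q" "q \<noteq> w" "p \<noteq> w"
    by (auto simp: card_3_iff)
  have "\<exists>j k. e = {i, j, k} \<and> i \<noteq> j \<and> j \<noteq> k \<and> i \<noteq> k"
    using e assms(3) by (auto simp: insert_commute)
  then obtain j k where "e = {i, j, k}" "i \<noteq> j" "j \<noteq> k" "i \<noteq> k" by blast
  moreover then have "i < n" "j < n" "k < n" using \<open>e \<subseteq> {0..<n}\<close> by auto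
  ultimately show ?thesis using that by blast
qed

lemma ar_edge: "{i, j, k} \<in> E \<Longrightarrow> ar E i j k = 1/2" by (simp add: ar_def)

lemma double_sum_zero:
  fixes f :: "nat \<Rightarrow> nat \<Rightarrow> real"
  assumes "\<And>j k. f j k \<ge> 0" "(\<Sum>j<n. \<Sum>k<n. f j k) = 0" "j < n" "k < n"
  shows "f j k = 0"
proof -
  have "\<forall>j\<in>{..<n}. (\<Sum>k<n. f j k) = 0"
    using assms(2) by (subst sum_nonneg_eq_0_iff[symmetric]) (auto intro: sum_nonneg assms(1))
  then have "(\<Sum>k<n. f j k) = 0" using assms(3) by auto
  then show ?thesis using assms(1,4) by (subst (asm) sum_nonneg_eq_0_iff) auto
qed

lemma lim_aux:
  fixes P A C d :: real
  assumes "d > 0" "C \<ge> 0" "\<And>t. 0 < t \<Longrightarrow> t < d \<Longrightarrow> P \<le> A + C * t"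
  shows "P \<le> A"
proof (rule ccontr)
  assume "\<not> P \<le> A"
  define t where "t = min (d/2) ((P - A) / (2 * (C + 1)))"
  have t: "0 < t" "t < d" using \<open>d > 0\<close> \<open>\<not> P \<le> A\<close> \<open>C \<ge> 0\<close> by (auto simp: t_def)
  have "t \<le> (P - A) / (2 * (C + 1))" by (simp add: t_def)
  then have "t * (2 * (C + 1)) \<le> P - A" using \<open>C \<ge> 0\<close> by (simp add: field_simps)
  moreover have "C * t \<le> (C + 1) * t" using t by simp
  moreover have "(C + 1) * t * 2 \<le> P - A" using \<open>t * (2 * (C + 1)) \<le> P - A\<close> by (simp add: mult_ac)
  moreover have "(C + 1) * t > 0" using t \<open>C \<ge> 0\<close> by simp
  ultimately have "C * t < P - A" by linarith
  with assms(3)[OF t] show False by simp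
qed

lemma TT_nonneg: "(\<And>j. x j \<ge> 0) \<Longrightarrow> TT n E x i \<ge> 0"
  unfolding TT_def by (intro sum_nonneg mult_nonneg_nonneg ar_nonneg) auto

lemma BB_nonneg: "(\<And>j. u j \<ge> 0) \<Longrightarrow> (\<And>j. v j \<ge> 0) \<Longrightarrow> (\<And>j. w j \<ge> 0) \<Longrightarrow> BB n E u v w \<ge> 0"
  unfolding BB_def by (intro sum_nonneg mult_nonneg_nonneg ar_nonneg) auto

lemma sum_delta_mult:
  fixes f :: "nat \<Rightarrow> real"
  assumes "i < n"
  shows "(\<Sum>a<n. (if a = i then 1 else 0) * f a) = f i"
proof -
  have "(\<Sum>a<n. (if a = i then 1 else 0) * f a) = (\<Sum>a<n. if a = i then f a else 0)"
    by (rule sum.cong) auto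
  also have "\<dots> = f i" using assms by simp
  finally show ?thesis .
qed

lemma BB_delta_first:
  assumes "i < n"
  shows "BB n E (\<lambda>a. if a = i then 1 else 0) v w = (\<Sum>j<n. \<Sum>k<n. ar E i j k * v j * w k)"
  unfolding BB_first using assms by (rule sum_delta_mult)

lemma GG_delta:
  assumes "i < n"
  shows "(\<Sum>j<n. \<Sum>k<n. ar E a j k * (if j = i then 1 else 0) * w k) = (\<Sum>k<n. ar E a i k * w k)"
proof -
  have "(\<Sum>j<n. \<Sum>k<n. ar E a j k * (if j = i then 1 else 0) * w k)
      = (\<Sum>j<n. (if j = i then 1 else 0) * (\<Sum>k<n. ar E a j k * w k))"
    by (simp add: sum_distrib_left mult_ac)
  also have "\<dots> = (\<Sum>k<n. ar E a i k * w k)" using assms by (rule sum_delta_mult)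
  finally show ?thesis .
qed

lemma BB_dd:
  assumes "uniform3 n E" "i < n"
  shows "BB n E (\<lambda>a. if a = i then 1 else 0) (\<lambda>a. if a = i then 1 else 0) w = 0"
  using assms by (simp add: BB_delta_first GG_delta ar_diag)

lemma BB_d_TT:
  assumes "i < n"
  shows "BB n E (\<lambda>a. if a = i then 1 else 0) x x = TT n E x i"
  using assms by (simp add: BB_delta_first TT_def)

lemma BB_homog: "BB n E (\<lambda>j. c * y j) (\<lambda>j. c * y j) (\<lambda>j. c * y j) = c^3 * BB n E y y y"
  unfolding BB_def by (simp add: sum_distrib_left power3_eq_cube mult_ac)

lemma NN_homog: "NN n (\<lambda>j. c * y j) = c^3 * NN n y"
  unfolding NN_def by (simp add: sum_distrib_left power_mult_distrib)

lemma BB_cong_n: "(\<And>j. j < n \<Longrightarrow> y j = y' j) \<Longrightarrow> BB n E y y y = BB n E y' y' y'"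
  unfolding BB_def by (intro sum.cong) auto


lemma NN_pert:
  assumes "i < n"
  shows "NN n (\<lambda>j. x j + t * (if j = i then 1 else 0)) = NN n x + ((x i + t)^3 - (x i)^3)"
proof -
  have "NN n (\<lambda>j. x j + t * (if j = i then 1 else 0)) =
     (\<Sum>j<n. (x j)^3 + (if j = i then 1 else 0) * ((x i + t)^3 - (x i)^3))"
    unfolding NN_def by (rule sum.cong) auto
  also have "\<dots> = NN n x + ((x i + t)^3 - (x i)^3)"
    unfolding NN_def sum.distrib using assms by (simp add: sum_delta_mult)
  finally show ?thesis .
qed

lemma BB_add1: "BB n E (\<lambda>a. f a + g a) v w = BB n E f v w + BB n E g v w"
  unfolding BB_def by (simp add: sum.distrib algebra_simps)

lemma BB_add2: "BB n E u (\<lambda>a. f a + g a) w = BB n E u f w + BB n E u g w"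
  unfolding BB_def by (simp add: sum.distrib algebra_simps)

lemma rtrancl_prop:
  assumes "(u, v) \<in> R\<^sup>*" "P u" "\<And>a b. (a, b) \<in> R \<Longrightarrow> P a \<Longrightarrow> P b"
  shows "P v"
  using assms(1,2) by (induction rule: rtrancl_induct) (auto intro: assms(3))

lemma perron_exists:
  assumes U: "uniform3 n E" and C: "hg_connected n E"
  obtains x r where "\<forall>i<n. x i > 0" "\<forall>i. n \<le> i \<longrightarrow> x i = 0" "r \<ge> 0"
     "\<forall>i<n. TT n E x i = r * (x i)^2"
proof -
  have n0: "0 < n" using C by (simp add: hg_connected_def)
  define S where "S = (\<lambda>i::nat. if i < n then {0..1::real} else {0})"
  define K where "K = PiE UNIV S \<inter> {x. NN n x = 1}"
  have memPi: "x \<in> PiE UNIV S \<longleftrightarrow> (\<forall>i. x i \<in> S i)" for x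
    by (simp add: PiE_UNIV_domain Pi_iff)
  have "compactin (product_topology (\<lambda>i. euclidean) UNIV) (PiE UNIV S)"
    by (subst compactin_PiE) (auto simp: S_def)
  then have cPi: "compact (PiE UNIV S)"
    by (metis euclidean_product_topology compactin_euclidean_iff)
  have coord: "continuous_on A (\<lambda>x::nat\<Rightarrow>real. x i)" for A i
    by (rule continuous_on_subset[OF continuous_on_product_coordinates]) auto
  have cN: "continuous_on UNIV (NN n)"
    unfolding NN_def by (intro continuous_intros coord)
  have "closed {x. NN n x = 1}"
    by (rule closed_Collect_eq[OF cN continuous_on_const])
  then have cK: "compact K" unfolding K_def using cPi by blast
  define x0 where "x0 = (\<lambda>i::nat. if i = 0 then (1::real) else 0)"
  have "NN n x0 = (\<Sum>i<n. if i = 0 then 1 else 0)"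
    unfolding NN_def by (rule sum.cong) (auto simp: x0_def)
  also have "\<dots> = 1" using n0 by simp
  finally have "x0 \<in> K"
    unfolding K_def memPi using n0 by (auto simp: x0_def S_def)
  then have Kne: "K \<noteq> {}" by blast
  have cF: "continuous_on K (\<lambda>x. BB n E x x x)"
    unfolding BB_def by (intro continuous_intros coord)
  obtain x where xK: "x \<in> K" and xmax: "\<forall>y\<in>K. BB n E y y y \<le> BB n E x x x"
    using continuous_attains_sup[OF cK Kne cF] by blast
  define r where "r = BB n E x x x"
  have xnn: "\<And>j. x j \<ge> 0" and xsupp: "\<And>j. n \<le> j \<Longrightarrow> x j = 0" and xN: "NN n x = 1"
  proof -
    have "\<forall>i. x i \<in> S i" "NN n x = 1" using xK memPi unfolding K_def by auto
    then show "\<And>j. x j \<ge> 0" "\<And>j. n \<le> j \<Longrightarrow> x j = 0" "NN n x = 1"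
      unfolding S_def by (fastforce split: if_splits)+
  qed
  have r0: "r \<ge> 0" unfolding r_def using xnn by (intro BB_nonneg)
  have glob: "BB n E y y y \<le> r * NN n y" if ynn: "\<And>j. y j \<ge> 0" and ysupp: "\<And>j. n \<le> j \<Longrightarrow> y j = 0" for y
  proof (cases "NN n y = 0")
    case True
    then have "\<forall>j\<in>{..<n}. y j ^ 3 = 0" unfolding NN_def
      by (subst sum_nonneg_eq_0_iff[symmetric]) (auto intro: ynn)
    then have "BB n E y y y = BB n E (\<lambda>_. 0) (\<lambda>_. 0) (\<lambda>_. 0)"
      by (intro BB_cong_n) auto
    also have "\<dots> = 0" by (simp add: BB_def)
    finally show ?thesis using True by simp
  next
    case False
    have "NN n y \<ge> 0" unfolding NN_def using ynn by (intro sum_nonneg) auto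
    with False have Npos: "NN n y > 0" by simp
    define c where "c = root 3 (NN n y)"
    have c0: "c > 0" using Npos by (simp add: c_def)
    have c3: "c ^ 3 = NN n y" using Npos by (simp add: c_def real_root_pow_pos2)
    define y' where "y' = (\<lambda>j. (1/c) * y j)"
    have yle: "y j \<le> c" if "j < n" for j
    proof -
      have "y j ^ 3 \<le> NN n y" unfolding NN_def
        by (rule member_le_sum[where f="\<lambda>j. y j ^ 3"]) (use that ynn in auto)
      then have "y j ^ Suc 2 \<le> c ^ Suc 2" using c3 by simp
      then show ?thesis using c0 power_le_imp_le_base[of "y j" 2 c] by simp
    qed
    have "y' \<in> K"
      unfolding K_def Int_iff memPi mem_Collect_eq
    proof (intro conjI allI)
      fix i show "y' i \<in> S i"
        using yle[of i] ynn[of i] ysupp[of i] c0 by (auto simp: S_def y'_def field_simps)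
    next
      show "NN n y' = 1" unfolding y'_def NN_homog using c3 c0 Npos by (simp add: field_simps)
    qed
    then have "BB n E y' y' y' \<le> r" using xmax by (simp add: r_def)
    then have "(1/c)^3 * BB n E y y y \<le> r" unfolding y'_def BB_homog .
    then have "BB n E y y y \<le> r * c^3" using c0 by (simp add: field_simps)
    then show ?thesis using c3 by simp
  qed
  define dl where "dl = (\<lambda>i a::nat. if a = i then (1::real) else 0)"
  have pert: "r + 3 * t * TT n E x i \<le> r * (1 + ((x i + t)^3 - (x i)^3))"
    if "i < n" "x i + t \<ge> 0" for i t
  proof -
    let ?y = "\<lambda>j. x j + t * dl i j"
    have "BB n E ?y ?y ?y \<le> r * NN n ?y"
      by (rule glob) (use that xnn xsupp in \<open>auto simp: dl_def\<close>)
    moreover have "BB n E ?y ?y ?y = r + 3 * t * TT n E x i"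
      unfolding BB_expand using that U by (simp add: r_def dl_def BB_dd BB_d_TT[where x=x])
    moreover have "NN n ?y = 1 + ((x i + t)^3 - (x i)^3)"
      using NN_pert[OF that(1), of x t] xN by (simp add: dl_def)
    ultimately show ?thesis by simp
  qed
  have up: "TT n E x i \<le> r * (x i)^2" if "i < n" for i
  proof (rule lim_aux[where d=1 and C="r * x i + r"])
    show "(1::real) > 0" by simp
    show "r * x i + r \<ge> 0" using r0 xnn[of i] by simp
    fix t :: real assume t: "0 < t" "t < 1"
    have "r + 3 * t * TT n E x i \<le> r * (1 + ((x i + t)^3 - (x i)^3))"
      using pert[OF that] t xnn[of i] by simp
    also have "\<dots> = r + t * (r * (3 * (x i)^2 + 3 * x i * t + t^2))"
      by (simp add: algebra_simps power2_eq_square power3_eq_cube)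
    finally have "t * (3 * TT n E x i) \<le> t * (r * (3 * (x i)^2 + 3 * x i * t + t^2))"
      by (simp add: algebra_simps)
    then have "3 * TT n E x i \<le> r * (3 * (x i)^2 + 3 * x i * t + t^2)"
      using t by simp
    then have h1: "3 * TT n E x i \<le> 3 * (r * (x i)^2) + 3 * (r * x i * t) + r * t^2"
      by (simp add: algebra_simps)
    have h2: "r * t^2 \<le> r * t" using t r0
      by (intro mult_left_mono) (auto simp: power2_eq_square)
    have h3: "r * t \<ge> 0" using r0 t by simp
    have h4: "(r * x i + r) * t = r * x i * t + r * t" by (simp add: algebra_simps)
    show "TT n E x i \<le> r * (x i)^2 + (r * x i + r) * t"
      unfolding h4 using h1 h2 h3 by linarith
  qed
  have lo: "TT n E x i \<ge> r * (x i)^2" if "i < n" "x i > 0" for i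
  proof -
    have "- TT n E x i \<le> - (r * (x i)^2)"
    proof (rule lim_aux[where d="x i" and C="r * x i"])
      show "x i > 0" by fact
      show "r * x i \<ge> 0" using r0 xnn[of i] by simp
      fix s :: real assume s: "0 < s" "s < x i"
      have "r + 3 * (-s) * TT n E x i \<le> r * (1 + ((x i + (-s))^3 - (x i)^3))"
        by (rule pert[OF that(1)]) (use s in simp)
      also have "\<dots> = r - s * (r * (3 * (x i)^2 - 3 * x i * s + s^2))"
        by (simp add: algebra_simps power2_eq_square power3_eq_cube)
      finally have "s * (r * (3 * (x i)^2 - 3 * x i * s + s^2)) \<le> s * (3 * TT n E x i)"
        by (simp add: algebra_simps)
      then have "r * (3 * (x i)^2 - 3 * x i * s + s^2) \<le> 3 * TT n E x i"
        using s by simp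
      moreover have "r * s^2 \<ge> 0" using r0 by simp
      ultimately show "- TT n E x i \<le> - (r * (x i)^2) + r * x i * s"
        by (simp add: algebra_simps)
    qed
    then show ?thesis by simp
  qed
  have T0: "TT n E x i = 0" if "i < n" "x i = 0" for i
    using up[OF that(1)] TT_nonneg[of x n E i] xnn that(2) by simp
  have pair: "(\<Sum>c<n. ar E i k c * x c) = 0"
    if ik: "i < n" "k < n" "i \<noteq> k" "x i = 0" "x k = 0" for i k
  proof -
    define u where "u = (\<lambda>a. dl i a + dl k a)"
    define S0 where "S0 = (\<Sum>c<n. ar E i k c * x c)"
    have S0nn: "S0 \<ge> 0" unfolding S0_def using xnn by (intro sum_nonneg mult_nonneg_nonneg ar_nonneg)
    have B1: "BB n E u x x = 0"
      unfolding u_def BB_add1 dl_def using ik by (simp add: BB_d_TT T0)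
    have Bik: "BB n E (dl i) (dl k) w = (\<Sum>c<n. ar E i k c * w c)" if "i < n" "k < n" for i k w
      unfolding dl_def using that by (simp add: BB_delta_first GG_delta)
    have B2: "BB n E u u x = 2 * S0"
      unfolding u_def BB_add1 BB_add2 using ik U
      by (simp add: Bik S0_def ar_diag ar_sym1[of E k i])
    have B3: "BB n E u u u \<ge> 0" unfolding u_def dl_def by (intro BB_nonneg) auto
    have Nu: "NN n (\<lambda>j. x j + t * u j) = 1 + 2 * t^3" for t
    proof -
      have "NN n (\<lambda>j. x j + t * u j) = (\<Sum>j<n. (x j)^3 + t^3 * u j)"
        unfolding NN_def by (rule sum.cong) (use ik in \<open>auto simp: u_def dl_def\<close>)
      also have "\<dots> = 1 + 2 * t^3"
        using xN ik unfolding sum.distrib NN_def by (simp add: u_def dl_def sum.distrib sum_distrib_left[symmetric])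
      finally show ?thesis .
    qed
    have "S0 \<le> 0"
    proof (rule lim_aux[where d=1 and C="r/3"])
      show "(1::real) > 0" by simp
      show "r / 3 \<ge> 0" using r0 by simp
      fix t :: real assume t: "0 < t" "t < 1"
      let ?y = "\<lambda>j. x j + t * u j"
      have "BB n E ?y ?y ?y \<le> r * NN n ?y"
        by (rule glob) (use t xnn xsupp ik in \<open>auto simp: u_def dl_def\<close>)
      then have "r + 3 * t^2 * (2 * S0) + t^3 * BB n E u u u \<le> r * (1 + 2 * t^3)"
        unfolding BB_expand Nu B1 B2 by (simp add: r_def)
      moreover have "t^3 * BB n E u u u \<ge> 0" using B3 t by simp
      ultimately have "t^2 * (6 * S0) \<le> t^2 * (2 * r * t)"
        by (simp add: algebra_simps power2_eq_square power3_eq_cube)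
      then have "6 * S0 \<le> 2 * r * t" using t by simp
      then show "S0 \<le> 0 + r / 3 * t" by simp
    qed
    then show ?thesis using S0nn by (simp add: S0_def)
  qed
  have zclosed: "x b = 0" if ab: "(a, b) \<in> {(a, b). \<exists>e\<in>E. a \<in> e \<and> b \<in> e}" and xa: "x a = 0" for a b
  proof -
    obtain e where e: "e \<in> E" "a \<in> e" "b \<in> e" using ab by blast
    obtain j k where jk: "e = {a, j, k}" "a \<noteq> j" "j \<noteq> k" "a \<noteq> k" "a < n" "j < n" "k < n"
      using edge_decomp[OF U e(1,2)] by blast
    have ar1: "ar E a j k = 1/2" "ar E a k j = 1/2"
      using e(1) jk(1) by (auto simp: ar_def insert_commute)
    have "ar E a j k * x j * x k = 0"
      using T0[OF jk(5) xa] unfolding TT_def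
      by (intro double_sum_zero[where f="\<lambda>j k. ar E a j k * x j * x k" and n=n])
         (auto intro: mult_nonneg_nonneg ar_nonneg xnn jk)
    then have "x j = 0 \<or> x k = 0" using ar1 by simp
    then have "x j = 0 \<and> x k = 0"
    proof
      assume xj: "x j = 0"
      have "(\<Sum>c<n. ar E a j c * x c) = 0" using pair[OF jk(5,6,2) xa xj] .
      then have "ar E a j k * x k = 0"
        by (subst (asm) sum_nonneg_eq_0_iff) (auto intro: mult_nonneg_nonneg ar_nonneg xnn jk)
      then show ?thesis using ar1 xj by simp
    next
      assume xk: "x k = 0"
      have "(\<Sum>c<n. ar E a k c * x c) = 0" using pair[OF jk(5,7,4) xa xk] .
      then have "ar E a k j * x j = 0"
        by (subst (asm) sum_nonneg_eq_0_iff) (auto intro: mult_nonneg_nonneg ar_nonneg xnn jk)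
      then show ?thesis using ar1 xk by simp
    qed
    then show ?thesis using e(3) jk(1) xa by auto
  qed
  have pos: "\<forall>i<n. x i > 0"
  proof (rule ccontr)
    assume "\<not> (\<forall>i<n. x i > 0)"
    then obtain i where i: "i < n" "x i = 0" using xnn by (metis less_eq_real_def)
    have "x j = 0" if "j < n" for j
    proof -
      have "(i, j) \<in> {(a, b). \<exists>e\<in>E. a \<in> e \<and> b \<in> e}\<^sup>*"
        using C i that unfolding hg_connected_def by blast
      then show ?thesis
        by (rule rtrancl_prop[where P="\<lambda>a. x a = 0"]) (use i zclosed in blast)+
    qed
    then have "NN n x = 0" unfolding NN_def by simp
    with xN show False by simp
  qed
  show ?thesis
  proof (rule that[OF pos _ r0])
    show "\<forall>i. n \<le> i \<longrightarrow> x i = 0" using xsupp by blast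
    show "\<forall>i<n. TT n E x i = r * (x i)^2"
    proof (intro allI impI)
      fix i assume "i < n"
      then show "TT n E x i = r * (x i)^2" using up[of i] lo[of i] pos by simp
    qed
  qed
qed


lemma adj_of_real: "adj_tensor E i j k = complex_of_real (ar E i j k)"
  by (simp add: adj_tensor_def ar_def)

lemma ta_formula:
  "tensor_apply n E (\<lambda>j. complex_of_real (s * x j) * w j) i =
   complex_of_real (s^2) * (\<Sum>j<n. \<Sum>k<n. complex_of_real (ar E i j k * x j * x k) * (w j * w k))"
  unfolding tensor_apply_def adj_of_real
  by (simp add: sum_distrib_left power2_eq_square mult_ac)

lemma ta_real:
  "tensor_apply n E (\<lambda>j. complex_of_real (x j)) i = complex_of_real (TT n E x i)"
  unfolding tensor_apply_def adj_of_real TT_def by simp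

lemma ta_norm:
  "cmod (tensor_apply n E y i) \<le> TT n E (\<lambda>j. cmod (y j)) i"
proof -
  have "cmod (tensor_apply n E y i) \<le> (\<Sum>j<n. cmod (\<Sum>k<n. adj_tensor E i j k * y j * y k))"
    unfolding tensor_apply_def by (rule norm_sum)
  also have "\<dots> \<le> (\<Sum>j<n. \<Sum>k<n. cmod (adj_tensor E i j k * y j * y k))"
    by (intro sum_mono norm_sum)
  also have "\<dots> = TT n E (\<lambda>j. cmod (y j)) i"
    unfolding TT_def adj_of_real by (simp add: norm_mult abs_of_nonneg ar_nonneg)
  finally show ?thesis .
qed

lemma TT_mono:
  assumes "\<And>j. j < n \<Longrightarrow> 0 \<le> z j" "\<And>j. j < n \<Longrightarrow> z j \<le> w j"
  shows "TT n E z i \<le> TT n E w i"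
  unfolding TT_def
proof (intro sum_mono)
  fix j k assume "j \<in> {..<n}" "k \<in> {..<n}"
  then show "ar E i j k * z j * z k \<le> ar E i j k * w j * w k"
    using assms[of j] assms[of k] ar_nonneg[of E i j k]
    by (intro mult_mono) (auto intro: mult_nonneg_nonneg)
qed

lemma TT_scale: "TT n E (\<lambda>j. s * x j) i = s^2 * TT n E x i"
  unfolding TT_def by (simp add: sum_distrib_left power2_eq_square mult_ac)

lemma argmax_nat:
  fixes f :: "nat \<Rightarrow> real"
  assumes "0 < n"
  obtains i where "i < n" "\<And>j. j < n \<Longrightarrow> f j \<le> f i"
proof -
  let ?m = "Max (f ` {..<n})"
  have "?m \<in> f ` {..<n}" using assms by (intro Max_in) auto
  then obtain i where "i < n" "f i = ?m" by auto
  moreover have "f j \<le> ?m" if "j < n" for j using that by (intro Max_ge) auto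
  ultimately show ?thesis using that by metis
qed

lemma unit_re_one:
  assumes "cmod p = 1" "Re p = 1" shows "p = 1"
proof -
  have "sqrt ((Re p)^2 + (Im p)^2) = 1" using assms(1) by (simp add: cmod_def)
  then have "(Re p)^2 + (Im p)^2 = 1" by (metis real_sqrt_eq_1_iff)
  then have "Im p = 0" using assms(2) by simp
  then show ?thesis using assms(2) by (simp add: complex_eq_iff)
qed

lemma double_sum_zero':
  fixes f :: "nat \<Rightarrow> nat \<Rightarrow> real"
  assumes "\<And>j k. j < n \<Longrightarrow> k < n \<Longrightarrow> f j k \<ge> 0" "(\<Sum>j<n. \<Sum>k<n. f j k) = 0" "j < n" "k < n"
  shows "f j k = 0"
proof -
  have "\<forall>j\<in>{..<n}. (\<Sum>k<n. f j k) = 0"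
    using assms(2) by (subst sum_nonneg_eq_0_iff[symmetric]) (auto intro!: sum_nonneg assms(1))
  then have "(\<Sum>k<n. f j k) = 0" using assms(3) by auto
  then show ?thesis using assms(1,3,4) by (subst (asm) sum_nonneg_eq_0_iff) auto
qed

lemma phase_lemma:
  fixes w :: "nat \<Rightarrow> nat \<Rightarrow> real" and p :: "nat \<Rightarrow> nat \<Rightarrow> complex"
  assumes wnn: "\<And>j k. w j k \<ge> 0" and pn: "\<And>j k. j < n \<Longrightarrow> k < n \<Longrightarrow> cmod (p j k) = 1"
    and eq: "(\<Sum>j<n. \<Sum>k<n. complex_of_real (w j k) * p j k) = complex_of_real (\<Sum>j<n. \<Sum>k<n. w j k)"
    and jk: "j < n" "k < n" "w j k > 0"
  shows "p j k = 1"
proof -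
  have "Re (\<Sum>j<n. \<Sum>k<n. complex_of_real (w j k) * p j k) = (\<Sum>j<n. \<Sum>k<n. w j k * Re (p j k))"
    by (simp add: Re_sum)
  with eq have "(\<Sum>j<n. \<Sum>k<n. w j k * Re (p j k)) = (\<Sum>j<n. \<Sum>k<n. w j k)" by simp
  then have "(\<Sum>j<n. \<Sum>k<n. w j k * (1 - Re (p j k))) = 0"
    by (simp add: algebra_simps sum_subtractf)
  moreover have "w j k * (1 - Re (p j k)) \<ge> 0" if "j < n" "k < n" for j k
    using wnn[of j k] complex_Re_le_cmod[of "p j k"] pn[OF that] by simp
  ultimately have "w j k * (1 - Re (p j k)) = 0"
    using jk
    by (intro double_sum_zero'[where f="\<lambda>j k. w j k * (1 - Re (p j k))" and n=n])
  then have "Re (p j k) = 1" using jk by simp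
  then show ?thesis using pn[OF jk(1,2)] by (intro unit_re_one)
qed


locale pctx =
  fixes n :: nat and E :: "nat set set" and x :: "nat \<Rightarrow> real" and r :: real
  assumes U: "uniform3 n E" and C: "hg_connected n E"
    and xpos: "\<forall>i<n. x i > 0" and xsupp: "\<forall>i. n \<le> i \<longrightarrow> x i = 0"
    and r0: "r \<ge> 0" and eig: "\<forall>i<n. TT n E x i = r * (x i)^2"
begin

lemma n0: "0 < n" using C by (simp add: hg_connected_def)

lemma ratio_setup:
  assumes ep: "eigenpair n E lam y"
  obtains i s where "i < n" "s > 0" "cmod (y i) = s * x i" "\<And>j. j < n \<Longrightarrow> cmod (y j) \<le> s * x j"
proof -
  obtain i where i: "i < n" "\<And>j. j < n \<Longrightarrow> cmod (y j) / x j \<le> cmod (y i) / x i"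
    using argmax_nat[OF n0, of "\<lambda>j. cmod (y j) / x j"] by blast
  define s where "s = cmod (y i) / x i"
  obtain j0 where j0: "j0 < n" "y j0 \<noteq> 0" using ep by (auto simp: eigenpair_def)
  have "cmod (y j0) / x j0 > 0" using j0 xpos by simp
  then have s0: "s > 0" using i(2)[OF j0(1)] by (simp add: s_def)
  have "x i > 0" using xpos i(1) by blast
  then have "cmod (y i) = s * x i" by (simp add: s_def)
  moreover have "cmod (y j) \<le> s * x j" if "j < n" for j
    using i(2)[OF that] xpos that by (simp add: s_def divide_le_eq mult.commute)
  ultimately show ?thesis using that i(1) s0 by blast
qed

lemma eigen_bound:
  assumes ep: "eigenpair n E lam y"
  shows "cmod lam \<le> r"
proof -
  obtain i s where hs: "i < n" "s > 0" "cmod (y i) = s * x i" "\<And>j. j < n \<Longrightarrow> cmod (y j) \<le> s * x j"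
    using ratio_setup[OF ep] by blast
  have zi: "cmod (y i) > 0" using hs xpos by simp
  have "cmod lam * (cmod (y i))^2 = cmod (tensor_apply n E y i)"
    using ep hs(1) by (simp add: eigenpair_def norm_mult norm_power)
  also have "\<dots> \<le> TT n E (\<lambda>j. cmod (y j)) i" by (rule ta_norm)
  also have "\<dots> \<le> TT n E (\<lambda>j. s * x j) i" by (rule TT_mono) (use hs in auto)
  also have "\<dots> = r * (cmod (y i))^2" using eig hs by (simp add: TT_scale power_mult_distrib)
  finally show ?thesis using zi by simp
qed

lemma x_eig: "eigenpair n E (complex_of_real r) (\<lambda>j. complex_of_real (x j))"
  unfolding eigenpair_def using xsupp xpos n0 eig
  by (auto simp: ta_real intro!: exI[where x=0])

lemma rho: "spec_radius n E = r"
  unfolding spec_radius_def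
proof (rule cSup_eq_maximum)
  show "r \<in> {cmod lam |lam. \<exists>x. eigenpair n E lam x}"
    using x_eig r0 by force
  show "\<And>y. y \<in> {cmod lam |lam. \<exists>x. eigenpair n E lam x} \<Longrightarrow> y \<le> r"
    using eigen_bound by blast
qed

lemma closure_step:
  assumes ep: "eigenpair n E (complex_of_real r) y" and s0: "s > 0"
    and zle: "\<And>j. j < n \<Longrightarrow> cmod (y j) \<le> s * x j"
    and a: "a < n" "cmod (y a) = s * x a" and jk: "j < n" "k < n" "{a, j, k} \<in> E"
  shows "cmod (y j) = s * x j"
proof -
  let ?z = "\<lambda>j. cmod (y j)"
  have "r * (?z a)^2 = cmod (tensor_apply n E y a)"
    using ep a(1) r0 by (simp add: eigenpair_def norm_mult norm_power)
  also have "\<dots> \<le> TT n E ?z a" by (rule ta_norm)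
  finally have h1: "r * (?z a)^2 \<le> TT n E ?z a" .
  have h2: "TT n E ?z a \<le> TT n E (\<lambda>j. s * x j) a" by (rule TT_mono) (use zle in auto)
  have h3: "TT n E (\<lambda>j. s * x j) a = r * (?z a)^2" using eig a by (simp add: TT_scale power_mult_distrib)
  have "TT n E (\<lambda>j. s * x j) a - TT n E ?z a = 0" using h1 h2 h3 by linarith
  then have sum0: "(\<Sum>j<n. \<Sum>k<n. ar E a j k * ((s * x j) * (s * x k) - ?z j * ?z k)) = 0"
    unfolding TT_def by (simp add: sum_subtractf[symmetric] algebra_simps)
  have nn: "ar E a j k * ((s * x j) * (s * x k) - ?z j * ?z k) \<ge> 0" if "j < n" "k < n" for j k
  proof -
    have "?z j * ?z k \<le> (s * x j) * (s * x k)"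
      using zle[OF that(1)] zle[OF that(2)]
      by (intro mult_mono) (auto intro: order_trans[OF norm_ge_zero])
    then show ?thesis using ar_nonneg[of E a j k] by simp
  qed
  have "ar E a j k * ((s * x j) * (s * x k) - ?z j * ?z k) = 0"
    by (rule double_sum_zero'[OF nn sum0 jk(1,2)])
  then have eq: "?z j * ?z k = (s * x j) * (s * x k)" using ar_edge[OF jk(3)] by simp
  show ?thesis
  proof (rule ccontr)
    assume "?z j \<noteq> s * x j"
    then have lt: "?z j < s * x j" using zle[OF jk(1)] by simp
    have pk: "s * x k > 0" using s0 xpos jk by simp
    have "?z j * ?z k \<le> ?z j * (s * x k)" using zle[OF jk(2)] by (intro mult_left_mono) auto
    also have "\<dots> < (s * x j) * (s * x k)" using mult_strict_right_mono[OF lt pk] .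
    finally show False using eq by simp
  qed
qed

lemma struct:
  assumes ep: "eigenpair n E (complex_of_real r) y"
  obtains s \<omega> where "s > 0" "\<And>j. j < n \<Longrightarrow> cmod (\<omega> j) = 1"
    "y = (\<lambda>j. complex_of_real (s * x j) * \<omega> j)"
    "\<And>i j k. i < n \<Longrightarrow> j < n \<Longrightarrow> k < n \<Longrightarrow> {i, j, k} \<in> E \<Longrightarrow> \<omega> j * \<omega> k = (\<omega> i)^2"
proof -
  obtain i0 s where hs: "i0 < n" "s > 0" "cmod (y i0) = s * x i0" "\<And>j. j < n \<Longrightarrow> cmod (y j) \<le> s * x j"
    using ratio_setup[OF ep] by blast
  have all: "cmod (y j) = s * x j" if "j < n" for j
  proof -
    have "(i0, j) \<in> {(a, b). \<exists>e\<in>E. a \<in> e \<and> b \<in> e}\<^sup>*"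
      using C hs(1) that unfolding hg_connected_def by blast
    then have "j < n \<longrightarrow> cmod (y j) = s * x j"
    proof (rule rtrancl_prop[where P="\<lambda>a. a < n \<longrightarrow> cmod (y a) = s * x a"])
      show "i0 < n \<longrightarrow> cmod (y i0) = s * x i0" using hs by blast
    next
      fix a b assume ab: "(a, b) \<in> {(a, b). \<exists>e\<in>E. a \<in> e \<and> b \<in> e}"
        and Pa: "a < n \<longrightarrow> cmod (y a) = s * x a"
      obtain e where e: "e \<in> E" "a \<in> e" "b \<in> e" using ab by blast
      obtain j k where jk: "e = {a, j, k}" "a \<noteq> j" "j \<noteq> k" "a \<noteq> k" "a < n" "j < n" "k < n"
        using edge_decomp[OF U e(1,2)] by blast
      have E1: "{a, j, k} \<in> E" "{a, k, j} \<in> E" using e(1) jk(1) by (auto simp: insert_commute)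
      have "cmod (y j) = s * x j"
        using closure_step[OF ep hs(2) hs(4) jk(5) _ jk(6,7) E1(1)] Pa jk(5) by blast
      moreover have "cmod (y k) = s * x k"
        using closure_step[OF ep hs(2) hs(4) jk(5) _ jk(7,6) E1(2)] Pa jk(5) by blast
      ultimately show "b < n \<longrightarrow> cmod (y b) = s * x b" using e(3) jk(1) Pa jk(5) by auto
    qed
    then show ?thesis using that by blast
  qed
  define \<omega> where "\<omega> = (\<lambda>j. if j < n then y j / complex_of_real (s * x j) else 0)"
  have ysupp: "y j = 0" if "n \<le> j" for j using ep that by (simp add: eigenpair_def)
  have yform: "y = (\<lambda>j. complex_of_real (s * x j) * \<omega> j)"
  proof
    fix j show "y j = complex_of_real (s * x j) * \<omega> j"
      using xpos hs(2) ysupp[of j] by (cases "j < n") (auto simp: \<omega>_def)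
  qed
  have wn: "cmod (\<omega> j) = 1" if "j < n" for j
  proof -
    have "x j > 0" using xpos that by blast
    then show ?thesis
      using all[OF that] that hs(2) by (simp add: \<omega>_def norm_divide norm_mult)
  qed
  have ph: "\<omega> j * \<omega> k = (\<omega> i)^2" if ijk: "i < n" "j < n" "k < n" "{i, j, k} \<in> E" for i j k
  proof -
    define w where "w = (\<lambda>j k. ar E i j k * x j * x k)"
    have "tensor_apply n E y i = complex_of_real r * (y i)^2"
      using ep ijk(1) by (simp add: eigenpair_def)
    then have "complex_of_real (s^2) * (\<Sum>j<n. \<Sum>k<n. complex_of_real (w j k) * (\<omega> j * \<omega> k)) =
        complex_of_real (s^2) * (complex_of_real (TT n E x i) * (\<omega> i)^2)"
      unfolding w_def by (subst (asm) yform, subst (asm) ta_formula, subst (asm) yform)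
         (simp add: eig ijk(1) power_mult_distrib mult_ac)
    then have e1: "(\<Sum>j<n. \<Sum>k<n. complex_of_real (w j k) * (\<omega> j * \<omega> k)) =
        complex_of_real (TT n E x i) * (\<omega> i)^2" using hs(2) by simp
    have uc: "\<omega> i * cnj (\<omega> i) = 1" using wn[OF ijk(1)]
      by (metis complex_norm_square mult.commute of_real_1 power_one)
    have "(\<Sum>j<n. \<Sum>k<n. complex_of_real (w j k) * (\<omega> j * \<omega> k * (cnj (\<omega> i))^2)) =
        (\<Sum>j<n. \<Sum>k<n. complex_of_real (w j k) * (\<omega> j * \<omega> k)) * (cnj (\<omega> i))^2"
      unfolding sum_distrib_right by (simp add: mult_ac)
    also have "\<dots> = complex_of_real (TT n E x i) * (\<omega> i * cnj (\<omega> i))^2"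
      unfolding e1 by (simp add: power_mult_distrib mult_ac)
    also have "\<dots> = complex_of_real (\<Sum>j<n. \<Sum>k<n. w j k)"
      unfolding uc by (simp add: TT_def w_def)
    finally have e2: "(\<Sum>j<n. \<Sum>k<n. complex_of_real (w j k) * (\<omega> j * \<omega> k * (cnj (\<omega> i))^2)) =
        complex_of_real (\<Sum>j<n. \<Sum>k<n. w j k)" .
    have "\<omega> j * \<omega> k * (cnj (\<omega> i))^2 = 1"
    proof (rule phase_lemma[where w=w and n=n, OF _ _ e2 ijk(2,3)])
      show "\<And>j k. 0 \<le> w j k" unfolding w_def using xpos xsupp
        by (metis ar_nonneg mult_nonneg_nonneg order.strict_implies_order not_le)
      show "\<And>ja ka. ja < n \<Longrightarrow> ka < n \<Longrightarrow> cmod (\<omega> ja * \<omega> ka * (cnj (\<omega> i))^2) = 1"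
        using wn ijk(1) by (simp add: norm_mult norm_power)
      show "0 < w j k" unfolding w_def using ar_edge[OF ijk(4)] xpos ijk by simp
    qed
    then have "\<omega> j * \<omega> k * ((\<omega> i * cnj (\<omega> i))^2) = (\<omega> i)^2"
      by (metis (no_types, lifting) mult.assoc mult.commute mult_1 power_mult_distrib)
    then show ?thesis unfolding uc by simp
  qed
  show ?thesis using that[OF hs(2) wn yform ph] .
qed

end


definition cc :: complex where "cc = Complex (-1/2) (sqrt 3 / 2)"

lemma cc2: "cc^2 = Complex (-1/2) (- sqrt 3 / 2)"
  by (simp add: cc_def power2_eq_square complex_eq_iff)

lemma cc3: "cc^3 = 1"
proof -
  have "cc^3 = cc^2 * cc" by (simp add: power3_eq_cube power2_eq_square)
  also have "\<dots> = 1" unfolding cc2 by (simp add: cc_def complex_eq_iff field_simps)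
  finally show ?thesis .
qed

lemma cc_pow_mod: "cc^a = cc^(a mod 3)"
proof -
  have "cc^a = cc^(3 * (a div 3) + a mod 3)" by simp
  also have "\<dots> = (cc^3)^(a div 3) * cc^(a mod 3)" by (simp only: power_add power_mult)
  finally show ?thesis by (simp add: cc3)
qed

lemma cc_inj: "a < 3 \<Longrightarrow> b < 3 \<Longrightarrow> cc^a = cc^b \<Longrightarrow> a = b"
proof -
  assume a: "a < 3" and b: "b < 3" and e: "cc^a = cc^b"
  have vals: "cc^0 \<noteq> cc^1" "cc^0 \<noteq> cc^2" "cc^1 \<noteq> cc^2"
    unfolding cc2 by (simp_all add: cc_def complex_eq_iff)
  have "a \<in> {0,1,2}" "b \<in> {0,1,2}" using a b by auto
  then show "a = b" using e vals by (auto simp: eval_nat_numeral)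
qed

lemma cc_eq_iff: "cc^a = cc^b \<longleftrightarrow> a mod 3 = b mod 3"
  by (metis cc_inj cc_pow_mod mod_less_divisor zero_less_numeral)

lemma cube_root:
  assumes "w^3 = 1" shows "\<exists>m<3. w = cc^m"
proof -
  have f: "(w - 1) * (w - cc) * (w - cc^2) = w^3 - (1 + cc + cc^2) * w^2 + (cc * (1 + cc + cc^2)) * w - cc^3"
    by (simp add: algebra_simps power2_eq_square power3_eq_cube)
  have s: "1 + cc + cc^2 = 0" unfolding cc2 by (simp add: cc_def complex_eq_iff)
  have "(w - 1) * (w - cc) * (w - cc^2) = 0" unfolding f s using assms by (simp add: cc3)
  then have "w = cc^0 \<or> w = cc^1 \<or> w = cc^2" by auto
  moreover have "(0::nat) < 3" "(1::nat) < 3" "(2::nat) < 3" by simp_all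
  ultimately show ?thesis by blast
qed


lemma tri_arith:
  fixes a b c :: nat
  assumes "a < 3" "b < 3" "c < 3" "(b + c) mod 3 = (2 * a) mod 3"
  shows "(a = b \<and> b = c) \<or> (a \<noteq> b \<and> b \<noteq> c \<and> a \<noteq> c)"
proof -
  have "a = 0 \<or> a = 1 \<or> a = 2" "b = 0 \<or> b = 1 \<or> b = 2" "c = 0 \<or> c = 1 \<or> c = 2"
    using assms(1-3) by auto
  then show ?thesis using assms(4) by (elim disjE) simp_all
qed

lemma tri_cover:
  fixes a b c :: nat
  assumes "a < 3" "b < 3" "c < 3" "a \<noteq> b" "b \<noteq> c" "a \<noteq> c" "m < 3"
  shows "m = a \<or> m = b \<or> m = c"
proof -
  have "a = 0 \<or> a = 1 \<or> a = 2" "b = 0 \<or> b = 1 \<or> b = 2" "c = 0 \<or> c = 1 \<or> c = 2"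
    "m = 0 \<or> m = 1 \<or> m = 2"
    using assms by auto
  then show ?thesis using assms(4-6) by (elim disjE) simp_all
qed

lemma tri_arith2:
  fixes a b c :: nat
  assumes "a < 3" "b < 3" "c < 3" "0 \<in> {a,b,c}" "1 \<in> {a,b,c}" "2 \<in> {a,b,c}"
  shows "(b + c) mod 3 = (2 * a) mod 3"
proof -
  have "a = 0 \<or> a = 1 \<or> a = 2" "b = 0 \<or> b = 1 \<or> b = 2" "c = 0 \<or> c = 1 \<or> c = 2"
    using assms(1-3) by auto
  then show ?thesis using assms(4-6) by (elim disjE) simp_all
qed

context pctx
begin

definition Yt :: "(nat \<Rightarrow> nat) \<Rightarrow> nat \<Rightarrow> complex" where
  "Yt t = (\<lambda>j. if j < n then complex_of_real (x j / x 0) * cc^(t j) else 0)"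

lemma x0pos: "x 0 > 0" using xpos n0 by blast

lemma stab_eq: "stab_set n E = {y. eigenpair n E (complex_of_real r) y \<and> y 0 = 1 \<and> (\<forall>i<n. y i \<noteq> 0)}"
  unfolding stab_set_def rho ..

lemma edge_all:
  assumes "e \<in> E" "a \<in> e"
  obtains j k where "e = {a, j, k}" "a \<noteq> j" "j \<noteq> k" "a \<noteq> k" "a < n" "j < n" "k < n"
    "{a, j, k} \<in> E" "{j, a, k} \<in> E" "{k, a, j} \<in> E"
proof -
  obtain j k where jk: "e = {a, j, k}" "a \<noteq> j" "j \<noteq> k" "a \<noteq> k" "a < n" "j < n" "k < n"
    using edge_decomp[OF U assms] by blast
  moreover have "{a, j, k} \<in> E" "{j, a, k} \<in> E" "{k, a, j} \<in> E"
    using assms(1) jk(1) by (auto simp: insert_commute)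
  ultimately show ?thesis using that by blast
qed

lemma lemA:
  assumes "y \<in> stab_set n E"
  shows "\<exists>t. (\<forall>j. t j < 3) \<and> (\<forall>j. n \<le> j \<longrightarrow> t j = 0) \<and> t 0 = 0 \<and> y = Yt t \<and>
     (\<forall>i j k. i < n \<longrightarrow> j < n \<longrightarrow> k < n \<longrightarrow> {i, j, k} \<in> E \<longrightarrow> (t j + t k) mod 3 = (2 * t i) mod 3)"
proof -
  have ep: "eigenpair n E (complex_of_real r) y" and y0: "y 0 = 1"
    using assms unfolding stab_eq by auto
  obtain s \<omega> where s0: "s > 0" and wn: "\<And>j. j < n \<Longrightarrow> cmod (\<omega> j) = 1"
    and yform: "y = (\<lambda>j. complex_of_real (s * x j) * \<omega> j)"
    and ph: "\<And>i j k. i < n \<Longrightarrow> j < n \<Longrightarrow> k < n \<Longrightarrow> {i, j, k} \<in> E \<Longrightarrow> \<omega> j * \<omega> k = (\<omega> i)^2"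
    using struct[OF ep] by blast
  have e0: "complex_of_real (s * x 0) * \<omega> 0 = 1" using y0 yform by metis
  then have "cmod (complex_of_real (s * x 0) * \<omega> 0) = 1" by simp
  then have sx0: "s * x 0 = 1" using wn[OF n0] s0 x0pos by (simp add: norm_mult)
  then have w0: "\<omega> 0 = 1" using e0 by simp
  have cube: "\<omega> j ^ 3 = 1" if "j < n" for j
  proof -
    have "(0, j) \<in> {(a, b). \<exists>e\<in>E. a \<in> e \<and> b \<in> e}\<^sup>*"
      using C n0 that unfolding hg_connected_def by blast
    then have "j < n \<longrightarrow> \<omega> j ^ 3 = 1"
    proof (rule rtrancl_prop[where P="\<lambda>a. a < n \<longrightarrow> \<omega> a ^ 3 = 1"])
      show "0 < n \<longrightarrow> \<omega> 0 ^ 3 = 1" using w0 by simp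
    next
      fix a b assume ab: "(a, b) \<in> {(a, b). \<exists>e\<in>E. a \<in> e \<and> b \<in> e}"
        and Pa: "a < n \<longrightarrow> \<omega> a ^ 3 = 1"
      obtain e where e: "e \<in> E" "a \<in> e" "b \<in> e" using ab by blast
      obtain j k where jk: "e = {a, j, k}" "a < n" "j < n" "k < n"
        "{a, j, k} \<in> E" "{j, a, k} \<in> E" "{k, a, j} \<in> E"
        using edge_all[OF e(1,2)] by blast
      have h1: "\<omega> j * \<omega> k = (\<omega> a)^2" using ph jk by blast
      have h2: "\<omega> a * \<omega> k = (\<omega> j)^2" using ph jk by blast
      have h3: "\<omega> a * \<omega> j = (\<omega> k)^2" using ph jk by blast
      have "\<omega> j ^ 3 = \<omega> j * (\<omega> j)^2" by (simp add: power3_eq_cube power2_eq_square)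
      also have "\<dots> = \<omega> a * (\<omega> j * \<omega> k)" unfolding h2[symmetric] by (simp add: mult_ac)
      also have "\<dots> = \<omega> a ^ 3" unfolding h1 by (simp add: power3_eq_cube power2_eq_square)
      finally have cj: "\<omega> j ^ 3 = \<omega> a ^ 3" .
      have "\<omega> k ^ 3 = \<omega> k * (\<omega> k)^2" by (simp add: power3_eq_cube power2_eq_square)
      also have "\<dots> = \<omega> a * (\<omega> j * \<omega> k)" unfolding h3[symmetric] by (simp add: mult_ac)
      also have "\<dots> = \<omega> a ^ 3" unfolding h1 by (simp add: power3_eq_cube power2_eq_square)
      finally have ck: "\<omega> k ^ 3 = \<omega> a ^ 3" .
      show "b < n \<longrightarrow> \<omega> b ^ 3 = 1" using e(3) jk(1) cj ck Pa jk(2) by auto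
    qed
    then show ?thesis using that by blast
  qed
  define t where "t = (\<lambda>j. if j < n then (SOME m. m < 3 \<and> \<omega> j = cc^m) else 0)"
  have tprop: "t j < 3 \<and> \<omega> j = cc^(t j)" if "j < n" for j
  proof -
    have "\<exists>m. m < 3 \<and> \<omega> j = cc^m" using cube_root[OF cube[OF that]] by blast
    then have "(SOME m. m < 3 \<and> \<omega> j = cc^m) < 3 \<and> \<omega> j = cc^(SOME m. m < 3 \<and> \<omega> j = cc^m)"
      by (rule someI_ex)
    then show ?thesis unfolding t_def using that by simp
  qed
  have t3: "\<forall>j. t j < 3" using tprop by (auto simp: t_def)
  have tsupp: "\<forall>j. n \<le> j \<longrightarrow> t j = 0" by (simp add: t_def)
  have t0: "t 0 = 0"
    using tprop[OF n0] w0 cc_inj[of 0 "t 0"] by simp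
  have "y = Yt t"
  proof
    fix j show "y j = Yt t j"
    proof (cases "j < n")
      case True
      have "s = 1 / x 0" using sx0 x0pos by (simp add: field_simps)
      then show ?thesis using True tprop[OF True] yform by (simp add: Yt_def)
    next
      case False
      then show ?thesis using xsupp yform by (simp add: Yt_def)
    qed
  qed
  moreover have "(t j + t k) mod 3 = (2 * t i) mod 3"
    if "i < n" "j < n" "k < n" "{i, j, k} \<in> E" for i j k
  proof -
    have "cc^(t j + t k) = \<omega> j * \<omega> k" using tprop that by (simp add: power_add)
    also have "\<dots> = (\<omega> i)^2" using ph that by blast
    also have "\<dots> = cc^(2 * t i)" using tprop that by (simp add: power_mult[symmetric] mult.commute)
    finally show ?thesis by (simp add: cc_eq_iff)
  qed
  ultimately show ?thesis using t3 tsupp t0 by blast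
qed

end


context pctx
begin

lemma lemB:
  assumes t0: "t 0 = 0"
    and ec: "\<And>i j k. i < n \<Longrightarrow> j < n \<Longrightarrow> k < n \<Longrightarrow> {i, j, k} \<in> E \<Longrightarrow> (t j + t k) mod 3 = (2 * t i) mod 3"
  shows "Yt t \<in> stab_set n E"
proof -
  define s where "s = 1 / x 0"
  define \<omega> where "\<omega> = (\<lambda>j. if j < n then cc^(t j) else 0)"
  have yf: "Yt t = (\<lambda>j. complex_of_real (s * x j) * \<omega> j)"
  proof
    fix j show "Yt t j = complex_of_real (s * x j) * \<omega> j"
      using xsupp by (cases "j < n") (auto simp: Yt_def s_def \<omega>_def)
  qed
  have cc0: "cc \<noteq> 0" by (simp add: cc_def complex_eq_iff)
  have eq: "tensor_apply n E (Yt t) i = complex_of_real r * (Yt t i)^2" if i: "i < n" for i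
  proof -
    define w where "w = (\<lambda>j k. ar E i j k * x j * x k)"
    have "(\<Sum>j<n. \<Sum>k<n. complex_of_real (w j k) * (\<omega> j * \<omega> k)) =
          (\<Sum>j<n. \<Sum>k<n. complex_of_real (w j k) * (\<omega> i)^2)"
    proof (intro sum.cong refl)
      fix j k assume jk: "j \<in> {..<n}" "k \<in> {..<n}"
      show "complex_of_real (w j k) * (\<omega> j * \<omega> k) = complex_of_real (w j k) * (\<omega> i)^2"
      proof (cases "{i, j, k} \<in> E")
        case True
        have "(t j + t k) mod 3 = (2 * t i) mod 3" using ec[OF i _ _ True] jk by simp
        then have "cc^(t j + t k) = cc^(2 * t i)" by (simp add: cc_eq_iff)
        then have "\<omega> j * \<omega> k = (\<omega> i)^2" using i jk
          by (simp add: \<omega>_def power_add power_mult[symmetric] mult.commute)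
        then show ?thesis by simp
      next
        case False
        then show ?thesis by (simp add: w_def ar_def)
      qed
    qed
    also have "\<dots> = complex_of_real (TT n E x i) * (\<omega> i)^2"
      by (simp add: TT_def w_def sum_distrib_right)
    finally have e1: "(\<Sum>j<n. \<Sum>k<n. complex_of_real (w j k) * (\<omega> j * \<omega> k)) =
        complex_of_real (TT n E x i) * (\<omega> i)^2" .
    have "tensor_apply n E (Yt t) i = complex_of_real (s^2) * (complex_of_real (TT n E x i) * (\<omega> i)^2)"
      unfolding yf ta_formula using e1 by (simp add: w_def)
    also have "\<dots> = complex_of_real r * (Yt t i)^2"
      unfolding yf using eig i by (simp add: power_mult_distrib mult_ac)
    finally show ?thesis .
  qed
  have Y0: "Yt t 0 = 1" using n0 x0pos t0 by (simp add: Yt_def)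
  have Ynz: "Yt t j \<noteq> 0" if "j < n" for j
  proof -
    have "x j > 0" using that xpos by blast
    then show ?thesis using that x0pos cc0 by (simp add: Yt_def)
  qed
  have "eigenpair n E (complex_of_real r) (Yt t)"
    unfolding eigenpair_def
  proof (intro conjI)
    show "\<forall>i\<ge>n. Yt t i = 0" by (simp add: Yt_def)
    show "\<exists>i<n. Yt t i \<noteq> 0" using Y0 n0 by (intro exI[where x=0]) simp
    show "\<forall>i<n. tensor_apply n E (Yt t) i = complex_of_real r * (Yt t i)\<^sup>2" using eq by blast
  qed
  then show ?thesis unfolding stab_eq using Y0 Ynz by simp
qed

lemma finite_stab: "finite (stab_set n E)"
proof -
  define T where "T = {t::nat\<Rightarrow>nat. \<forall>j. (j \<in> {..<n} \<longrightarrow> t j \<in> {..<3}) \<and> (j \<notin> {..<n} \<longrightarrow> t j = 0)}"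
  have "finite T" unfolding T_def by (rule finite_set_of_finite_funs) auto
  moreover have "stab_set n E \<subseteq> Yt ` T"
  proof
    fix y assume "y \<in> stab_set n E"
    then obtain t where "\<forall>j. t j < 3" "\<forall>j. n \<le> j \<longrightarrow> t j = 0" "y = Yt t"
      using lemA by blast
    moreover then have "t \<in> T" unfolding T_def by auto
    ultimately show "y \<in> Yt ` T" by blast
  qed
  ultimately show ?thesis by (meson finite_imageI finite_subset)
qed

lemma Yt_triv:
  assumes "Yt t = Yt (\<lambda>_. 0)" "j < n" "t j < 3"
  shows "t j = 0"
proof -
  have "Yt t j = Yt (\<lambda>_. 0) j" using assms(1) by simp
  moreover have "x j > 0" using assms(2) xpos by blast
  ultimately have "cc^(t j) = cc^0" using assms(2) x0pos by (simp add: Yt_def)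
  then show ?thesis using cc_inj[OF assms(3)] by simp
qed

lemma partition_from_t:
  fixes t :: "nat \<Rightarrow> nat"
  assumes t3: "\<forall>j. t j < 3" and t0: "t 0 = 0" and nz: "\<exists>j<n. t j \<noteq> 0"
    and ec: "\<forall>i j k. i < n \<longrightarrow> j < n \<longrightarrow> k < n \<longrightarrow> {i, j, k} \<in> E \<longrightarrow> (t j + t k) mod 3 = (2 * t i) mod 3"
  shows "\<exists>V0 V1 V2. V0 \<noteq> {} \<and> V1 \<noteq> {} \<and> V2 \<noteq> {} \<and>
       V0 \<inter> V1 = {} \<and> V0 \<inter> V2 = {} \<and> V1 \<inter> V2 = {} \<and>
       V0 \<union> V1 \<union> V2 = {0..<n} \<and>
       (\<forall>e\<in>E. (e \<subseteq> V0 \<or> e \<subseteq> V1 \<or> e \<subseteq> V2) \<or>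
               (e \<inter> V0 \<noteq> {} \<and> e \<inter> V1 \<noteq> {} \<and> e \<inter> V2 \<noteq> {}))"
proof -
  define V where "V = (\<lambda>m. {j. j < n \<and> t j = m})"
  have edge_case: "(t a = t j \<and> t j = t k) \<or> (t a \<noteq> t j \<and> t j \<noteq> t k \<and> t a \<noteq> t k)"
    if "a < n" "j < n" "k < n" "{a, j, k} \<in> E" for a j k
    using tri_arith[OF t3[rule_format] t3[rule_format] t3[rule_format] ec[rule_format, OF that]] .
  have edge_prop: "(e \<subseteq> V 0 \<or> e \<subseteq> V 1 \<or> e \<subseteq> V 2) \<or>
               (e \<inter> V 0 \<noteq> {} \<and> e \<inter> V 1 \<noteq> {} \<and> e \<inter> V 2 \<noteq> {})" if e: "e \<in> E" for e
  proof -
    have "card e = 3" using U e by (simp add: uniform3_def)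
    then have "e \<noteq> {}" by auto
    then obtain a where a: "a \<in> e" by blast
    obtain j k where jk: "e = {a, j, k}" "a \<noteq> j" "j \<noteq> k" "a \<noteq> k" "a < n" "j < n" "k < n"
        "{a, j, k} \<in> E"
      using edge_all[OF e a] by blast
    show ?thesis
    proof (cases "t a = t j \<and> t j = t k")
      case True
      have sub: "e \<subseteq> V (t a)" using True jk(1,5-7) by (auto simp: V_def)
      have "t a = 0 \<or> t a = 1 \<or> t a = 2" using t3[rule_format, of a] by auto
      then show ?thesis using sub by auto
    next
      case False
      then have d: "t a \<noteq> t j \<and> t j \<noteq> t k \<and> t a \<noteq> t k" using edge_case[OF jk(5-8)] by auto
      have hit: "e \<inter> V m \<noteq> {}" if m3: "m < 3" for m
      proof -
        have "m = t a \<or> m = t j \<or> m = t k"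
          by (rule tri_cover[OF t3[rule_format] t3[rule_format] t3[rule_format] d[THEN conjunct1] d[THEN conjunct2, THEN conjunct1] d[THEN conjunct2, THEN conjunct2] m3])
        then show ?thesis
        proof (elim disjE)
          assume "m = t a" then have "a \<in> e \<inter> V m" using jk(1,5) by (simp add: V_def)
          then show ?thesis by blast
        next
          assume "m = t j" then have "j \<in> e \<inter> V m" using jk(1,6) by (simp add: V_def)
          then show ?thesis by blast
        next
          assume "m = t k" then have "k \<in> e \<inter> V m" using jk(1,7) by (simp add: V_def)
          then show ?thesis by blast
        qed
      qed
      have "e \<inter> V 0 \<noteq> {}" "e \<inter> V 1 \<noteq> {}" "e \<inter> V 2 \<noteq> {}" by (simp_all add: hit)
      then show ?thesis by blast
    qed
  qed
  have V0ne: "V 0 \<noteq> {}" using n0 t0 by (auto simp: V_def)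
  have V12: "V 1 \<noteq> {} \<and> V 2 \<noteq> {}"
  proof (rule ccontr)
    assume emp: "\<not> (V 1 \<noteq> {} \<and> V 2 \<noteq> {})"
    have tz: "t j = 0" if "j < n" for j
    proof -
      have "(0, j) \<in> {(a, b). \<exists>e\<in>E. a \<in> e \<and> b \<in> e}\<^sup>*"
        using C n0 that unfolding hg_connected_def by blast
      then have "j < n \<longrightarrow> t j = 0"
      proof (rule rtrancl_prop[where P="\<lambda>a. a < n \<longrightarrow> t a = 0"])
        show "0 < n \<longrightarrow> t 0 = 0" using t0 by simp
      next
        fix a b assume ab: "(a, b) \<in> {(a, b). \<exists>e\<in>E. a \<in> e \<and> b \<in> e}"
          and Pa: "a < n \<longrightarrow> t a = 0"
        obtain e where e: "e \<in> E" "a \<in> e" "b \<in> e" using ab by blast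
        obtain j k where jk: "e = {a, j, k}" "a < n" "j < n" "k < n" "{a, j, k} \<in> E"
          using edge_all[OF e(1,2)] by blast
        have "t a = t j \<and> t j = t k"
        proof (rule ccontr)
          assume "\<not> (t a = t j \<and> t j = t k)"
          then have d: "t a \<noteq> t j \<and> t j \<noteq> t k \<and> t a \<noteq> t k" using edge_case[OF jk(2-5)] by auto
          have cov: "m = t a \<or> m = t j \<or> m = t k" if "m < 3" for m
            by (rule tri_cover[OF t3[rule_format] t3[rule_format] t3[rule_format] d[THEN conjunct1] d[THEN conjunct2, THEN conjunct1] d[THEN conjunct2, THEN conjunct2] that])
          have m1: "1 = t a \<or> 1 = t j \<or> 1 = t k" by (rule cov) simp
          have m2: "2 = t a \<or> 2 = t j \<or> 2 = t k" by (rule cov) simp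
          have "V 1 \<noteq> {}" using m1 jk(2-4) unfolding V_def by auto
          moreover have "V 2 \<noteq> {}" using m2 jk(2-4) unfolding V_def by auto
          ultimately have "V 1 \<noteq> {}" "V 2 \<noteq> {}" by blast+
          then show False using emp by blast
        qed
        then show "b < n \<longrightarrow> t b = 0" using e(3) jk(1,2) Pa by auto
      qed
      then show ?thesis using that by blast
    qed
    obtain j where "j < n" "t j \<noteq> 0" using nz by auto
    then show False using tz by simp
  qed
  have disj: "V 0 \<inter> V 1 = {}" "V 0 \<inter> V 2 = {}" "V 1 \<inter> V 2 = {}" by (auto simp: V_def)
  have un: "V 0 \<union> V 1 \<union> V 2 = {0..<n}"
  proof -
    have "t j = 0 \<or> t j = 1 \<or> t j = 2" for j using t3[rule_format, of j] by auto
    then show ?thesis by (auto simp: V_def)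
  qed
  have ep: "\<forall>e\<in>E. (e \<subseteq> V 0 \<or> e \<subseteq> V 1 \<or> e \<subseteq> V 2) \<or>
               (e \<inter> V 0 \<noteq> {} \<and> e \<inter> V 1 \<noteq> {} \<and> e \<inter> V 2 \<noteq> {})"
    using edge_prop by blast
  show ?thesis
    apply (rule exI[of _ "V 0"], rule exI[of _ "V 1"], rule exI[of _ "V 2"])
    using V0ne V12 disj un ep by blast
qed

end


lemma tri_shift:
  fixes a b c z :: nat
  assumes "a < 3" "b < 3" "c < 3" "z < 3" "(b + c) mod 3 = (2 * a) mod 3"
  shows "((b + 3 - z) mod 3 + (c + 3 - z) mod 3) mod 3 = (2 * ((a + 3 - z) mod 3)) mod 3"
proof -
  have "a = 0 \<or> a = 1 \<or> a = 2" "b = 0 \<or> b = 1 \<or> b = 2" "c = 0 \<or> c = 1 \<or> c = 2"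
    "z = 0 \<or> z = 1 \<or> z = 2"
    using assms(1-4) by auto
  then show ?thesis using assms(5) by (elim disjE) simp_all
qed

lemma card_ge2_dim:
  assumes "finite S"
  shows "(LEAST k. card S \<le> 3 ^ k) > 0 \<longleftrightarrow> card S \<ge> 2"
proof
  assume "(LEAST k. card S \<le> 3 ^ k) > 0"
  then have "\<not> card S \<le> 3 ^ 0" by (metis Least_eq_0 less_irrefl)
  then show "card S \<ge> 2" by simp
next
  assume c2: "card S \<ge> 2"
  have ex: "card S \<le> 3 ^ card S"
  proof -
    have "card S < 2 ^ card S" by simp
    also have "(2::nat) ^ card S \<le> 3 ^ card S" by (rule power_mono) auto
    finally show ?thesis by simp
  qed
  show "(LEAST k. card S \<le> 3 ^ k) > 0"
  proof (rule ccontr)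
    assume "\<not> (LEAST k. card S \<le> 3 ^ k) > 0"
    then have "(LEAST k. card S \<le> 3 ^ k) = 0" by simp
    moreover have "card S \<le> 3 ^ (LEAST k. card S \<le> 3 ^ k)" by (rule LeastI[of _ "card S"]) (rule ex)
    ultimately have "card S \<le> 1" by simp
    with c2 show False by simp
  qed
qed

context pctx
begin

lemma dim_iff: "stab_dim n E > 0 \<longleftrightarrow> card (stab_set n E) \<ge> 2"
  unfolding stab_dim_def by (rule card_ge2_dim[OF finite_stab])

lemma forward:
  assumes "stab_dim n E > 0"
  shows "\<exists>V0 V1 V2. V0 \<noteq> {} \<and> V1 \<noteq> {} \<and> V2 \<noteq> {} \<and>
       V0 \<inter> V1 = {} \<and> V0 \<inter> V2 = {} \<and> V1 \<inter> V2 = {} \<and>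
       V0 \<union> V1 \<union> V2 = {0..<n} \<and>
       (\<forall>e\<in>E. (e \<subseteq> V0 \<or> e \<subseteq> V1 \<or> e \<subseteq> V2) \<or>
               (e \<inter> V0 \<noteq> {} \<and> e \<inter> V1 \<noteq> {} \<and> e \<inter> V2 \<noteq> {}))"
proof -
  have "card (stab_set n E) \<ge> 2" using assms dim_iff by simp
  then have "\<not> card (stab_set n E) \<le> Suc 0" by simp
  then obtain y1 y2 where y: "y1 \<in> stab_set n E" "y2 \<in> stab_set n E" "y1 \<noteq> y2"
    using card_le_Suc0_iff_eq[OF finite_stab] by auto
  obtain t1 where t1: "\<forall>j. t1 j < 3" "\<forall>j. n \<le> j \<longrightarrow> t1 j = 0" "t1 0 = 0" "y1 = Yt t1"
     "\<forall>i j k. i < n \<longrightarrow> j < n \<longrightarrow> k < n \<longrightarrow> {i, j, k} \<in> E \<longrightarrow> (t1 j + t1 k) mod 3 = (2 * t1 i) mod 3"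
    using lemA[OF y(1)] by blast
  obtain t2 where t2: "\<forall>j. t2 j < 3" "\<forall>j. n \<le> j \<longrightarrow> t2 j = 0" "t2 0 = 0" "y2 = Yt t2"
     "\<forall>i j k. i < n \<longrightarrow> j < n \<longrightarrow> k < n \<longrightarrow> {i, j, k} \<in> E \<longrightarrow> (t2 j + t2 k) mod 3 = (2 * t2 i) mod 3"
    using lemA[OF y(2)] by blast
  show ?thesis
  proof (cases "\<exists>j<n. t1 j \<noteq> 0")
    case True
    show ?thesis by (rule partition_from_t[OF t1(1,3) True t1(5)])
  next
    case F1: False
    show ?thesis
    proof (cases "\<exists>j<n. t2 j \<noteq> 0")
      case True
      show ?thesis by (rule partition_from_t[OF t2(1,3) True t2(5)])
    next
      case False
      have "t1 = t2"
      proof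
        fix j show "t1 j = t2 j" using F1 False t1(2) t2(2) by (cases "j < n") auto
      qed
      then have "y1 = y2" using t1(4) t2(4) by simp
      with y(3) show ?thesis by simp
    qed
  qed
qed

lemma backward:
  assumes "\<exists>V0 V1 V2. V0 \<noteq> {} \<and> V1 \<noteq> {} \<and> V2 \<noteq> {} \<and>
       V0 \<inter> V1 = {} \<and> V0 \<inter> V2 = {} \<and> V1 \<inter> V2 = {} \<and>
       V0 \<union> V1 \<union> V2 = {0..<n} \<and>
       (\<forall>e\<in>E. (e \<subseteq> V0 \<or> e \<subseteq> V1 \<or> e \<subseteq> V2) \<or>
               (e \<inter> V0 \<noteq> {} \<and> e \<inter> V1 \<noteq> {} \<and> e \<inter> V2 \<noteq> {}))"
  shows "stab_dim n E > 0"
proof -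
  obtain V0 V1 V2 where ne: "V0 \<noteq> {}" "V1 \<noteq> {}" "V2 \<noteq> {}"
    and dj: "V0 \<inter> V1 = {}" "V0 \<inter> V2 = {}" "V1 \<inter> V2 = {}"
    and un: "V0 \<union> V1 \<union> V2 = {0..<n}"
    and ep: "\<forall>e\<in>E. (e \<subseteq> V0 \<or> e \<subseteq> V1 \<or> e \<subseteq> V2) \<or>
               (e \<inter> V0 \<noteq> {} \<and> e \<inter> V1 \<noteq> {} \<and> e \<inter> V2 \<noteq> {})"
    using assms by (elim exE conjE) (rule that; assumption)
  define col :: "nat \<Rightarrow> nat" where "col = (\<lambda>j. if j \<in> V0 then 0 else if j \<in> V1 then 1 else 2)"
  have col3: "col j < 3" for j by (simp add: col_def)
  have c0: "col j = 0" if "j \<in> V0" for j using that by (simp add: col_def)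
  have c1: "col j = 1" if "j \<in> V1" for j using that dj by (auto simp: col_def)
  have c2: "col j = 2" if "j \<in> V2" for j using that dj by (auto simp: col_def)
  have cedge: "(col j + col k) mod 3 = (2 * col i) mod 3"
    if ijk: "i < n" "j < n" "k < n" "{i, j, k} \<in> E" for i j k
  proof -
    have ep1: "({i, j, k} \<subseteq> V0 \<or> {i, j, k} \<subseteq> V1 \<or> {i, j, k} \<subseteq> V2) \<or>
        ({i, j, k} \<inter> V0 \<noteq> {} \<and> {i, j, k} \<inter> V1 \<noteq> {} \<and> {i, j, k} \<inter> V2 \<noteq> {})"
      by (rule bspec[OF ep ijk(4)])
    then show ?thesis
    proof (elim disjE conjE)
      assume "{i, j, k} \<subseteq> V0" then show ?thesis using c0 by simp
    next
      assume "{i, j, k} \<subseteq> V1" then show ?thesis using c1 by simp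
    next
      assume "{i, j, k} \<subseteq> V2" then show ?thesis using c2 by simp
    next
      assume h0: "{i, j, k} \<inter> V0 \<noteq> {}" and h1: "{i, j, k} \<inter> V1 \<noteq> {}" and h2: "{i, j, k} \<inter> V2 \<noteq> {}"
      obtain a where a: "a \<in> {i, j, k}" "a \<in> V0" using h0 by blast
      obtain b where b: "b \<in> {i, j, k}" "b \<in> V1" using h1 by blast
      obtain c where c: "c \<in> {i, j, k}" "c \<in> V2" using h2 by blast
      have "0 \<in> {col i, col j, col k}" using a c0[OF a(2)] by auto
      moreover have "1 \<in> {col i, col j, col k}" using b c1[OF b(2)] by auto
      moreover have "2 \<in> {col i, col j, col k}" using c c2[OF c(2)] by auto
      ultimately show ?thesis by (rule tri_arith2[OF col3 col3 col3])
    qed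
  qed
  define t where "t = (\<lambda>j. (col j + 3 - col 0) mod 3)"
  have t0: "t 0 = 0" by (simp add: t_def)
  have tedge: "(t j + t k) mod 3 = (2 * t i) mod 3"
    if "i < n" "j < n" "k < n" "{i, j, k} \<in> E" for i j k
    unfolding t_def by (rule tri_shift[OF col3 col3 col3 col3 cedge[OF that]])
  have Y1: "Yt t \<in> stab_set n E" by (rule lemB[where t=t, OF t0 tedge])
  have Y2: "Yt (\<lambda>_. 0) \<in> stab_set n E" by (rule lemB) simp_all
  obtain j where j: "j < n" "col j \<noteq> col 0"
  proof -
    have "0 \<in> V0 \<union> V1 \<union> V2" using un n0 by simp
    moreover have "V0 \<subseteq> {0..<n}" "V1 \<subseteq> {0..<n}" using un by auto
    ultimately consider "0 \<in> V0" | "0 \<in> V1" | "0 \<in> V2" by blast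
    then show ?thesis
    proof cases
      case 1
      obtain j where "j \<in> V1" using ne(2) by blast
      then show ?thesis using that[of j] c1 c0[OF 1] \<open>V1 \<subseteq> {0..<n}\<close> by auto
    next
      case 2
      obtain j where "j \<in> V0" using ne(1) by blast
      then show ?thesis using that[of j] c0 c1[OF 2] \<open>V0 \<subseteq> {0..<n}\<close> by auto
    next
      case 3
      obtain j where "j \<in> V0" using ne(1) by blast
      then show ?thesis using that[of j] c0 c2[OF 3] \<open>V0 \<subseteq> {0..<n}\<close> by auto
    qed
  qed
  have tj: "t j \<noteq> 0" "t j < 3"
  proof -
    have "col j = 0 \<or> col j = 1 \<or> col j = 2" "col 0 = 0 \<or> col 0 = 1 \<or> col 0 = 2"
      using col3[of j] col3[of 0] by auto
    then show "t j \<noteq> 0" using j(2) unfolding t_def by (elim disjE) simp_all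
    show "t j < 3" by (simp add: t_def)
  qed
  have neq: "Yt t \<noteq> Yt (\<lambda>_. 0)"
  proof
    assume "Yt t = Yt (\<lambda>_. 0)"
    then have "t j = 0" by (rule Yt_triv[of t j, OF _ j(1) tj(2)])
    with tj(1) show False by simp
  qed
  have "card {Yt t, Yt (\<lambda>_. 0)} \<le> card (stab_set n E)"
    using Y1 Y2 finite_stab by (intro card_mono) auto
  then have "card (stab_set n E) \<ge> 2" using neq by simp
  then show ?thesis using dim_iff by simp
qed

end

theorem proposition4p7:
  fixes n :: nat and E :: "nat set set"
  assumes "uniform3 n E" and "hg_connected n E"
  shows "stab_dim n E > 0 \<longleftrightarrow>
    (\<exists>V0 V1 V2. V0 \<noteq> {} \<and> V1 \<noteq> {} \<and> V2 \<noteq> {} \<and>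
       V0 \<inter> V1 = {} \<and> V0 \<inter> V2 = {} \<and> V1 \<inter> V2 = {} \<and>
       V0 \<union> V1 \<union> V2 = {0..<n} \<and>
       (\<forall>e\<in>E. (e \<subseteq> V0 \<or> e \<subseteq> V1 \<or> e \<subseteq> V2) \<or>
               (e \<inter> V0 \<noteq> {} \<and> e \<inter> V1 \<noteq> {} \<and> e \<inter> V2 \<noteq> {})))"
proof -
  obtain x r where h: "\<forall>i<n. x i > 0" "\<forall>i. n \<le> i \<longrightarrow> x i = 0" "r \<ge> 0"
      "\<forall>i<n. TT n E x i = r * (x i)^2"
    by (rule perron_exists[OF assms])
  interpret P: pctx n E x r
    by (intro pctx.intro) (use assms h in auto)
  show ?thesis by (rule iffI[OF P.forward P.backward])
qed

end
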